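(* Let $F$ be an almost-bipartite graph, let $b$ be an integer with $b>|F|$, and let $H$ be a graph. Then $H\vee bK_1$ is $F$-free if and only if $H\in\mathcal{M}_F$.
   Context: All graphs are finite and simple. $H\vee bK_1$ is the join of $H$ with an independent set of $b$ vertices (every vertex of $H$ adjacent to every one of the $b$ new vertices). A graph $F$ is almost-bipartite if it can be made bipartite by removing at most one edge. For such $F$, $\mathcal{A}_F$ is the family of subgraphs of $F$ induced by $V(F)\setminus I$, where $I$ ranges over all maximal independent sets of $F$; $\mathcal{M}_F$ is the family of all graphs (possibly with isolated vertices) containing no subgraph isomorphic to a member of $\mathcal{A}_F$. $F$-free means no subgraph isomorphic to $F$; $|F|$ is the number of vertices of $F$. *)

theory Defs
  imports Main
begin

type_synonym 'a graph = "'a set \<times> 'a set set"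

definition verts :: "'a graph \<Rightarrow> 'a set" where "verts G = fst G"
definition edges :: "'a graph \<Rightarrow> 'a set set" where "edges G = snd G"

definition graph :: "'a graph \<Rightarrow> bool" where
  "graph G \<longleftrightarrow> finite (verts G) \<and>
     (\<forall>e\<in>edges G. \<exists>u v. u \<noteq> v \<and> u \<in> verts G \<and> v \<in> verts G \<and> e = {u, v})"

definition contains_subgraph :: "'b graph \<Rightarrow> 'a graph \<Rightarrow> bool" where
  "contains_subgraph H G \<longleftrightarrow>
     (\<exists>f. inj_on f (verts G) \<and> f ` verts G \<subseteq> verts H \<and>
          (\<forall>e\<in>edges G. f ` e \<in> edges H))"

definition free :: "'b graph \<Rightarrow> 'a graph \<Rightarrow> bool" where
  "free H F \<longleftrightarrow> \<not> contains_subgraph H F"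

definition bipartite :: "'a graph \<Rightarrow> bool" where
  "bipartite G \<longleftrightarrow> (\<exists>A. \<forall>e\<in>edges G. \<exists>u v. e = {u, v} \<and> u \<in> A \<and> v \<notin> A)"

definition almost_bipartite :: "'a graph \<Rightarrow> bool" where
  "almost_bipartite G \<longleftrightarrow>
     (\<exists>E'. E' \<subseteq> edges G \<and> card (edges G - E') \<le> 1 \<and> bipartite (verts G, E'))"

definition independent :: "'a graph \<Rightarrow> 'a set \<Rightarrow> bool" where
  "independent G I \<longleftrightarrow> I \<subseteq> verts G \<and> (\<forall>e\<in>edges G. \<not> e \<subseteq> I)"

definition maximal_independent :: "'a graph \<Rightarrow> 'a set \<Rightarrow> bool" where
  "maximal_independent G I \<longleftrightarrow> independent G I \<and>
     (\<forall>J. independent G J \<and> I \<subseteq> J \<longrightarrow> J = I)"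

definition induced :: "'a graph \<Rightarrow> 'a set \<Rightarrow> 'a graph" where
  "induced G S = (S, {e\<in>edges G. e \<subseteq> S})"

definition A_family :: "'a graph \<Rightarrow> 'a graph set" where
  "A_family F = {induced F (verts F - I) | I. maximal_independent F I}"

definition in_M_family :: "'a graph \<Rightarrow> 'b graph \<Rightarrow> bool" where
  "in_M_family F H \<longleftrightarrow> (\<forall>A\<in>A_family F. \<not> contains_subgraph H A)"

definition join_indep :: "'a graph \<Rightarrow> nat \<Rightarrow> ('a + nat) graph" where
  "join_indep H b =
     (Inl ` verts H \<union> Inr ` {0..<b},
      ((\<lambda>e. Inl ` e) ` edges H) \<union> {{Inl v, Inr i} | v i. v \<in> verts H \<and> i < b})"

end

theory Submission
  imports Defs
begin

lemma exists_max_indep: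
  assumes "finite (verts F)" and "independent F J"
  shows "\<exists>I. maximal_independent F I \<and> J \<subseteq> I"
proof -
  let ?S = "{I. independent F I \<and> J \<subseteq> I}"
  have fin: "finite ?S"
    by (rule finite_subset[of _ "Pow (verts F)"]) (auto simp: independent_def assms(1))
  have ne: "?S \<noteq> {}" using assms(2) by auto
  obtain I where I: "I \<in> ?S" "card I = Max (card ` ?S)"
    using Max_in[of "card ` ?S"] fin ne by (metis (no_types, lifting) finite_imageI image_iff image_is_empty)
  have "maximal_independent F I"
    unfolding maximal_independent_def
  proof (intro conjI allI impI)
    show "independent F I" using I by auto
    fix K assume K: "independent F K \<and> I \<subseteq> K"
    then have "K \<in> ?S" using I by auto
    then have "card K \<le> card I" using I fin by simp
    moreover have "finite K" using K assms(1) unfolding independent_def by (meson finite_subset)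
    ultimately show "K = I" using K card_seteq[of K I] by auto
  qed
  then show ?thesis using I by auto
qed

lemma verts_pair: "verts (a, c) = a" by (simp add: verts_def)
lemma edges_pair: "edges (a, c) = c" by (simp add: edges_def)

theorem lemma4p2:
  fixes F :: "'a graph" and H :: "'b graph" and b :: nat
  assumes "graph F" and "almost_bipartite F"
    and "b > card (verts F)"
    and "graph H"
  shows "free (join_indep H b) F \<longleftrightarrow> in_M_family F H"
proof
  assume fr: "free (join_indep H b) F"
  show "in_M_family F H"
    unfolding in_M_family_def
  proof (intro ballI notI)
    fix A assume "A \<in> A_family F"
    then obtain I where I: "maximal_independent F I" and A: "A = induced F (verts F - I)"
      unfolding A_family_def by auto
    assume "contains_subgraph H A"
    then obtain g where g: "inj_on g (verts F - I)" "g ` (verts F - I) \<subseteq> verts H"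
      "\<forall>e\<in>{e\<in>edges F. e \<subseteq> verts F - I}. g ` e \<in> edges H"
      unfolding contains_subgraph_def A induced_def verts_def edges_def by auto
    have finI: "finite I" using I assms(1) unfolding maximal_independent_def independent_def graph_def
      by (meson finite_subset)
    have "card I \<le> card (verts F)" using I assms(1) unfolding maximal_independent_def independent_def graph_def
      by (simp add: card_mono)
    then have "card I \<le> card {0..<b}" using assms(3) by simp
    then obtain h where h: "h ` I \<subseteq> {0..<b}" "inj_on h I"
      using card_le_inj[OF finI] by blast
    define f where "f v = (if v \<in> I then Inr (h v) else Inl (g v))" for v
    have "contains_subgraph (join_indep H b) F"
      unfolding contains_subgraph_def
    proof (intro exI conjI)
      show "inj_on f (verts F)"
        using g(1) h(2) unfolding inj_on_def f_def by auto
      show "f ` verts F \<subseteq> verts (join_indep H b)"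
        using g(2) h(1) unfolding f_def join_indep_def verts_def by auto
      show "\<forall>e\<in>edges F. f ` e \<in> edges (join_indep H b)"
      proof
        fix e assume e: "e \<in> edges F"
        then obtain u v where uv: "u \<noteq> v" "u \<in> verts F" "v \<in> verts F" "e = {u, v}"
          using assms(1) unfolding graph_def by blast
        have notboth: "\<not> (u \<in> I \<and> v \<in> I)"
          using I e uv(4) unfolding maximal_independent_def independent_def by auto
        show "f ` e \<in> edges (join_indep H b)"
        proof (cases "u \<in> I")
          case True
          then have "v \<notin> I" using notboth by auto
          then have "f ` e = {Inl (g v), Inr (h u)}" using True uv unfolding f_def by auto
          moreover have "g v \<in> verts H" "h u < b" using g(2) h(1) \<open>v \<notin> I\<close> True uv by auto
          ultimately show ?thesis unfolding join_indep_def edges_def by auto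
        next
          case False
          show ?thesis
          proof (cases "v \<in> I")
            case True
            then have "f ` e = {Inl (g u), Inr (h v)}" using False uv unfolding f_def by auto
            moreover have "g u \<in> verts H" "h v < b" using g(2) h(1) False True uv by auto
            ultimately show ?thesis unfolding join_indep_def edges_def by (auto simp del: insert_commute)
          next
            case False2: False
            have sub: "e \<subseteq> verts F - I" using uv False False2 by auto
            then have "g ` e \<in> edges H" using g(3) e by auto
            moreover have "f ` e = Inl ` g ` e" using sub unfolding f_def by auto
            ultimately show ?thesis unfolding join_indep_def edges_def by (auto simp del: insert_commute)
          qed
        qed
      qed
    qed
    then show False using fr unfolding free_def by simp
  qed
next
  assume M: "in_M_family F H"
  show "free (join_indep H b) F"
    unfolding free_def
  proof
    assume "contains_subgraph (join_indep H b) F"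
    then obtain f where f: "inj_on f (verts F)" "f ` verts F \<subseteq> verts (join_indep H b)"
      "\<forall>e\<in>edges F. f ` e \<in> edges (join_indep H b)"
      unfolding contains_subgraph_def by auto
    define J where "J = {v\<in>verts F. \<exists>i. f v = Inr i}"
    have "independent F J"
      unfolding independent_def
    proof (intro conjI ballI notI)
      show "J \<subseteq> verts F" unfolding J_def by auto
      fix e assume e: "e \<in> edges F" and sub: "e \<subseteq> J"
      obtain u v where uv: "u \<noteq> v" "u \<in> verts F" "v \<in> verts F" "e = {u, v}"
        using assms(1) e unfolding graph_def by blast
      obtain i j where ij: "f u = Inr i" "f v = Inr j" using sub uv unfolding J_def by auto
      have "{Inr i, Inr j} \<in> edges (join_indep H b)" using f(3) e uv ij by auto
      then show False unfolding join_indep_def edges_def by auto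
    qed
    then obtain I where I: "maximal_independent F I" "J \<subseteq> I"
    proof -
      have "finite (verts F)" using assms(1) unfolding graph_def by simp
      then show ?thesis using exists_max_indep \<open>independent F J\<close> that by blast
    qed
    have A: "induced F (verts F - I) \<in> A_family F" unfolding A_family_def using I by auto
    have isl: "\<And>v. v \<in> verts F - I \<Longrightarrow> f v = Inl (projl (f v))"
    proof -
      fix v assume "v \<in> verts F - I"
      then have "v \<notin> J" "v \<in> verts F" using I by auto
      then show "f v = Inl (projl (f v))" unfolding J_def by (cases "f v") auto
    qed
    define g where "g v = projl (f v)" for v
    have "contains_subgraph H (induced F (verts F - I))"
      unfolding contains_subgraph_def induced_def verts_pair edges_pair
    proof (intro exI conjI)
      show "inj_on g (verts F - I)"
        unfolding inj_on_def g_def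
      proof (intro ballI impI)
        fix x y assume xy: "x \<in> verts F - I" "y \<in> verts F - I" "projl (f x) = projl (f y)"
        then have "f x = f y" using isl by metis
        then show "x = y" using f(1) xy unfolding inj_on_def by auto
      qed
      show "g ` (verts F - I) \<subseteq> verts H"
      proof
        fix w assume "w \<in> g ` (verts F - I)"
        then obtain v where v: "v \<in> verts F - I" "w = g v" by auto
        have "f v \<in> verts (join_indep H b)" using f(2) v by auto
        then show "w \<in> verts H" using isl[OF v(1)] v(2) unfolding g_def join_indep_def verts_def
          by auto
      qed
      show "\<forall>e\<in>{e \<in> edges F. e \<subseteq> verts F - I}. g ` e \<in> edges H"
      proof
        fix e assume e: "e \<in> {e \<in> edges F. e \<subseteq> verts F - I}"
        then have e1: "e \<in> edges F" "e \<subseteq> verts F - I" by auto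
        have fe: "f ` e = Inl ` g ` e" using e1(2) isl unfolding g_def by force
        have "f ` e \<in> edges (join_indep H b)" using f(3) e1 by auto
        then have "Inl ` g ` e \<in> (\<lambda>e. (Inl ` e :: ('b + nat) set)) ` edges H \<or>
                   Inl ` g ` e \<in> {{Inl v, Inr i} | v i. v \<in> verts H \<and> i < b}"
          unfolding fe join_indep_def edges_pair by simp
        moreover have "Inl ` g ` e \<notin> {{Inl v, Inr i} | v i. v \<in> verts H \<and> i < b}"
          by auto
        ultimately have "Inl ` g ` e \<in> (\<lambda>e. (Inl ` e :: ('b + nat) set)) ` edges H" by blast
        then obtain e' where "e' \<in> edges H" "Inl ` g ` e = (Inl ` e' :: ('b + nat) set)" by auto
        then have "g ` e = e'" by (metis inj_Inl inj_image_eq_iff)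
        then show "g ` e \<in> edges H" using \<open>e' \<in> edges H\<close> by simp
      qed
    qed
    then show False using M A unfolding in_M_family_def by auto
  qed
qed

end
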